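(* Let $n,d\ge 2$, and let $0\le a<b\le d$. Let $\boldsymbol\gamma_a\in\mathbb{R}^{\binom{n+a-1}{a}}$ and $\boldsymbol\gamma_b\in\mathbb{R}^{\binom{n+b-1}{b}}$ be nonnegative vectors with $R(\boldsymbol\gamma_a)=R(\boldsymbol\gamma_b)=1$, and set $$\mathbf v=(-1)^{d-a}J_{n,d}J_{n,d-1}\cdots J_{n,a}\boldsymbol\gamma_a+(-1)^{d-b}J_{n,d}J_{n,d-1}\cdots J_{n,b}\boldsymbol\gamma_b.$$ If $\mathbf v\ge 0$, then $R(\mathbf v)\ge \binom{n+2}{3}-1$.
   Context: For a real vector $\mathbf x$, $R(\mathbf x)$ is the number of nonzero components; inequalities are componentwise. For $j\ge 0$, $J_{n,j}$ is the matrix, with respect to the left lexicographic bases of degree-$j$ and degree-$(j+1)$ monomials in $x_1,\dots,x_n$, of the linear map $A(x)\mapsto A(x)(x_1+\cdots+x_n)$; so $J_{n,d}\cdots J_{n,a}\boldsymbol\gamma$ is the coefficient vector of $G(x)(x_1+\cdots+x_n)^{d-a+1}$ where $G$ has coefficient vector $\boldsymbol\gamma$. *)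

theory Defs
  imports Complex_Main
begin

(* Monomials of degree j in x_1..x_n, as exponent vectors alpha (x_{i+1} has exponent alpha i),
  indices i < n, zero beyond n. *)
definition monoms :: "nat \<Rightarrow> nat \<Rightarrow> (nat \<Rightarrow> nat) set" where
  "monoms n j = {\<alpha>. (\<forall>i\<ge>n. \<alpha> i = 0) \<and> (\<Sum>i<n. \<alpha> i) = j}"

(* A coefficient vector of degree j: a real function on exponent vectors supported on monoms n j
  (the coordinates of a vector in R^(n+j-1 choose j) w.r.t. the monomial basis). *)
definition is_coeffvec :: "nat \<Rightarrow> nat \<Rightarrow> ((nat \<Rightarrow> nat) \<Rightarrow> real) \<Rightarrow> bool" where
  "is_coeffvec n j g \<longleftrightarrow> (\<forall>\<alpha>. \<alpha> \<notin> monoms n j \<longrightarrow> g \<alpha> = 0)"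

(* The map J_{n,j}: A(x) maps to A(x)(x_1+...+x_n), on coefficient vectors. *)
definition Jmul :: "nat \<Rightarrow> ((nat \<Rightarrow> nat) \<Rightarrow> real) \<Rightarrow> ((nat \<Rightarrow> nat) \<Rightarrow> real)" where
  "Jmul n g = (\<lambda>\<alpha>. \<Sum>i\<in>{i. i < n \<and> 0 < \<alpha> i}. g (\<alpha>(i := \<alpha> i - 1)))"

definition Rnz :: "nat \<Rightarrow> nat \<Rightarrow> ((nat \<Rightarrow> nat) \<Rightarrow> real) \<Rightarrow> nat" where
  "Rnz n j g = card {\<alpha> \<in> monoms n j. g \<alpha> \<noteq> 0}"

end

theory Submission imports Defs begin


definition lst :: "nat \<Rightarrow> nat list \<Rightarrow> (nat \<Rightarrow> nat)" where
  "lst n l = (\<lambda>i. if i < n then l ! i else 0)"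

lemma monoms_img: "monoms n j = lst n ` {l. length l = n \<and> sum_list l = j}"
proof (rule set_eqI, rule iffI)
  fix \<alpha> assume a: "\<alpha> \<in> monoms n j"
  let ?l = "map \<alpha> [0..<n]"
  have "lst n ?l = \<alpha>" using a by (auto simp: lst_def monoms_def fun_eq_iff)
  moreover have "sum_list ?l = j" using a
    by (simp add: monoms_def sum_list_sum_nth atLeast0LessThan)
  ultimately show "\<alpha> \<in> lst n ` {l. length l = n \<and> sum_list l = j}" by force
next
  fix \<alpha> assume "\<alpha> \<in> lst n ` {l. length l = n \<and> sum_list l = j}"
  then obtain l where l: "length l = n" "sum_list l = j" "\<alpha> = lst n l" by auto
  have "(\<Sum>i<n. \<alpha> i) = sum_list l" using l
    by (simp add: lst_def sum_list_sum_nth atLeast0LessThan)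
  then show "\<alpha> \<in> monoms n j" using l by (auto simp: monoms_def lst_def)
qed

lemma lst_inj: "inj_on (lst n) {l. length l = n \<and> sum_list l = j}"
proof (rule inj_onI)
  fix x y assume "x \<in> {l. length l = n \<and> sum_list l = j}" "y \<in> {l. length l = n \<and> sum_list l = j}"
    "lst n x = lst n y"
  then show "x = y" by (auto simp: lst_def fun_eq_iff intro!: nth_equalityI) (metis)
qed

lemma card_monoms: "card (monoms n j) = (j + n - 1) choose j"
  by (simp add: monoms_img card_image[OF lst_inj] card_length_sum_list)

lemma finite_monoms: "finite (monoms n j)"
proof -
  have "{l::nat list. length l = n \<and> sum_list l = j} \<subseteq> {xs. set xs \<subseteq> {..j} \<and> length xs = n}"
    using member_le_sum_list by fastforce
  then have "finite {l::nat list. length l = n \<and> sum_list l = j}"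
    using finite_lists_length_eq[of "{..j}" n] finite_subset by blast
  then show ?thesis by (simp add: monoms_img)
qed



lemma fin_idx: "finite {i. i < n \<and> 0 < (\<alpha>::nat\<Rightarrow>nat) i}" by simp

lemma Jpow_nonneg: "(\<forall>x. f x \<ge> 0) \<Longrightarrow> (Jmul n ^^ p) f \<gamma> \<ge> 0"
proof (induction p arbitrary: \<gamma>)
  case 0 then show ?case by simp
next
  case (Suc p) then show ?case by (simp add: Jmul_def sum_nonneg)
qed

lemma Jmul_ge:
  assumes "\<forall>x. f x \<ge> 0" "i < n" "0 < \<gamma> i"
  shows "f (\<gamma>(i := \<gamma> i - 1)) \<le> Jmul n f \<gamma>"
  unfolding Jmul_def
  by (rule member_le_sum[where f="\<lambda>i. f (\<gamma>(i := \<gamma> i - 1))", OF _ _ fin_idx]) (use assms in auto)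

lemma Jpow_witness: "(Jmul n ^^ p) f \<gamma> \<noteq> 0 \<Longrightarrow> \<exists>\<gamma>'. \<gamma>' \<le> \<gamma> \<and> f \<gamma>' \<noteq> 0"
proof (induction p arbitrary: \<gamma>)
  case 0 then show ?case by auto
next
  case (Suc p)
  then have "Jmul n ((Jmul n ^^ p) f) \<gamma> \<noteq> 0" by simp
  then have "(\<Sum>i\<in>{i. i < n \<and> 0 < \<gamma> i}. (Jmul n ^^ p) f (\<gamma>(i := \<gamma> i - 1))) \<noteq> 0"
    by (simp only: Jmul_def[of n "(Jmul n ^^ p) f"] not_False_eq_True)
  then obtain i where "(Jmul n ^^ p) f (\<gamma>(i := \<gamma> i - 1)) \<noteq> 0"
    by (meson sum.neutral)
  then obtain \<gamma>' where "\<gamma>' \<le> \<gamma>(i := \<gamma> i - 1)" "f \<gamma>' \<noteq> 0" using Suc.IH by blast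
  moreover have "\<gamma>(i := \<gamma> i - 1) \<le> \<gamma>" by (simp add: le_fun_def)
  ultimately show ?case using order_trans by blast
qed

lemma sum_dec:
  fixes \<gamma> :: "nat \<Rightarrow> nat" and n :: nat
  assumes "i < n" "0 < \<gamma> i"
  shows "(\<Sum>k<n. (\<gamma>(i := \<gamma> i - 1)) k) + 1 = (\<Sum>k<n. \<gamma> k)"
proof -
  have "(\<Sum>k<n. \<gamma> k) = \<gamma> i + (\<Sum>k\<in>{..<n} - {i}. \<gamma> k)"
    by (rule sum.remove) (use assms in auto)
  moreover have "(\<Sum>k<n. (\<gamma>(i := \<gamma> i - 1)) k) = (\<gamma>(i := \<gamma> i - 1)) i + (\<Sum>k\<in>{..<n} - {i}. (\<gamma>(i := \<gamma> i - 1)) k)"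
    by (rule sum.remove) (use assms in auto)
  moreover have "(\<Sum>k\<in>{..<n} - {i}. (\<gamma>(i := \<gamma> i - 1)) k) = (\<Sum>k\<in>{..<n} - {i}. \<gamma> k)"
    by (rule sum.cong) auto
  ultimately show ?thesis using assms by simp
qed

lemma le_sum_eq:
  fixes \<delta> \<gamma> :: "nat \<Rightarrow> nat"
  assumes "\<delta> \<le> \<gamma>" "\<forall>i\<ge>n. \<gamma> i = 0" "(\<Sum>i<n. \<gamma> i) = (\<Sum>i<n. \<delta> i)"
  shows "\<delta> = \<gamma>"
proof (rule ccontr)
  assume "\<delta> \<noteq> \<gamma>"
  then obtain i where i: "\<delta> i \<noteq> \<gamma> i" by auto
  have le: "\<And>k. \<delta> k \<le> \<gamma> k" using assms(1) by (simp add: le_fun_def)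
  have "i < n" using i assms(2) le[of i] by (metis le_zero_eq not_le)
  then have "(\<Sum>i<n. \<delta> i) < (\<Sum>i<n. \<gamma> i)"
    using i le by (intro sum_strict_mono_ex1) (auto simp: order.strict_iff_order)
  then show False using assms(3) by simp
qed

lemma Jpow_pos:
  assumes "\<forall>x. f x \<ge> 0" "f \<delta> > 0" "\<delta> \<le> \<gamma>" "\<forall>i\<ge>n. \<gamma> i = 0"
    "(\<Sum>i<n. \<gamma> i) = (\<Sum>i<n. \<delta> i) + p"
  shows "(Jmul n ^^ p) f \<gamma> > 0"
  using assms(3-5)
proof (induction p arbitrary: \<gamma>)
  case 0
  then have "\<delta> = \<gamma>" using le_sum_eq by simp
  then show ?case using assms(2) by simp
next
  case (Suc p)
  have le: "\<And>k. \<delta> k \<le> \<gamma> k" using Suc.prems(1) by (simp add: le_fun_def)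
  have "\<exists>i<n. \<delta> i < \<gamma> i"
  proof (rule ccontr)
    assume "\<not> ?thesis"
    then have h: "\<And>i. i<n \<Longrightarrow> \<gamma> i \<le> \<delta> i" by (meson not_less)
    have "(\<Sum>i<n. \<gamma> i) \<le> (\<Sum>i<n. \<delta> i)" by (rule sum_mono) (simp add: h)
    then show False using Suc.prems(3) by simp
  qed
  then obtain i where i: "i < n" "\<delta> i < \<gamma> i" by blast
  let ?g = "\<gamma>(i := \<gamma> i - 1)"
  have "\<delta> \<le> ?g" using le i by (auto simp: le_fun_def)
  moreover have "\<forall>k\<ge>n. ?g k = 0" using Suc.prems(2) i by auto
  moreover have "(\<Sum>k<n. ?g k) = (\<Sum>i<n. \<delta> i) + p"
    using sum_dec[of i n \<gamma>] i Suc.prems(3) by simp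
  ultimately have pos: "(Jmul n ^^ p) f ?g > 0" using Suc.IH by blast
  have "(Jmul n ^^ p) f ?g \<le> Jmul n ((Jmul n ^^ p) f) \<gamma>"
    using Jmul_ge[of "(Jmul n ^^ p) f" i n \<gamma>] Jpow_nonneg[OF assms(1)] i by simp
  then show ?case using pos by simp
qed

lemma Jpow_lin:
  "(Jmul n ^^ p) (\<lambda>\<gamma>. x * f \<gamma> + y * g \<gamma>) = (\<lambda>\<gamma>. x * (Jmul n ^^ p) f \<gamma> + y * (Jmul n ^^ p) g \<gamma>)"
proof (induction p)
  case 0 then show ?case by simp
next
  case (Suc p) then show ?case
    by (simp add: Jmul_def sum.distrib sum_distrib_left)
qed



lemma upset_card:
  fixes \<alpha> :: "nat \<Rightarrow> nat"
  assumes "\<alpha> \<in> monoms n j"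
  shows "card {\<gamma>\<in>monoms n (j + p). \<alpha> \<le> \<gamma>} = card (monoms n p)"
proof -
  let ?h = "\<lambda>\<nu>::nat\<Rightarrow>nat. \<lambda>i. \<nu> i + \<alpha> i"
  have inj: "inj_on ?h (monoms n p)" by (rule inj_onI) (simp add: fun_eq_iff)
  have "?h ` monoms n p = {\<gamma>\<in>monoms n (j + p). \<alpha> \<le> \<gamma>}"
  proof (rule set_eqI, rule iffI)
    fix \<gamma> assume "\<gamma> \<in> ?h ` monoms n p"
    then obtain \<nu> where "\<nu> \<in> monoms n p" "\<gamma> = ?h \<nu>" by blast
    then show "\<gamma> \<in> {\<gamma>\<in>monoms n (j + p). \<alpha> \<le> \<gamma>}" using assms
      by (auto simp: monoms_def le_fun_def sum.distrib)
  next
    fix \<gamma> assume g: "\<gamma> \<in> {\<gamma>\<in>monoms n (j + p). \<alpha> \<le> \<gamma>}"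
    let ?\<nu> = "\<lambda>i. \<gamma> i - \<alpha> i"
    have le: "\<And>i. \<alpha> i \<le> \<gamma> i" using g by (simp add: le_fun_def)
    have "(\<Sum>i<n. ?\<nu> i) + (\<Sum>i<n. \<alpha> i) = (\<Sum>i<n. \<gamma> i)"
      by (simp add: sum.distrib[symmetric] le)
    then have "?\<nu> \<in> monoms n p" using g assms by (auto simp: monoms_def)
    moreover have "\<gamma> = ?h ?\<nu>" using le by (simp add: fun_eq_iff)
    ultimately show "\<gamma> \<in> ?h ` monoms n p" using image_eqI[of \<gamma> ?h ?\<nu> "monoms n p"] by blast
  qed
  then show ?thesis using card_image[OF inj] by simp
qed

lemma count_main:
  assumes "n \<ge> 2" "m + 3 \<le> q"
  shows "card (monoms n m) + card (monoms n 3) \<le> card (monoms n q) + 1"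
proof -
  define e :: "nat \<Rightarrow> nat" where "e = (\<lambda>i. if i = 0 then q - m else 0)"
  define e3 :: "nat \<Rightarrow> nat" where "e3 = (\<lambda>i. if i = 0 then 3 else 0)"
  define X where "X = {\<gamma>\<in>monoms n (q - m + m). e \<le> \<gamma>}"
  let ?h = "\<lambda>\<mu>::nat\<Rightarrow>nat. \<lambda>i. if i = 1 then \<mu> i + (q - 3) else \<mu> i"
  define Y where "Y = ?h ` (monoms n 3 - {e3})"
  have em: "e \<in> monoms n (q - m)" using assms by (simp add: monoms_def e_def)
  have cX: "card X = card (monoms n m)" unfolding X_def by (rule upset_card[OF em])
  have e3m: "e3 \<in> monoms n 3" using assms by (simp add: monoms_def e3_def)
  have inj: "inj_on ?h (monoms n 3 - {e3})"
  proof (rule inj_onI)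
    fix x y assume xy: "?h x = ?h y"
    show "x = y"
    proof
      fix i from fun_cong[OF xy, of i] show "x i = y i" by (cases "i = 1") auto
    qed
  qed
  have cY: "card Y = card (monoms n 3) - 1"
    unfolding Y_def using card_image[OF inj] e3m finite_monoms by simp
  have sub: "X \<union> Y \<subseteq> monoms n q"
  proof -
    have "q - m + m = q" using assms by simp
    then have "X \<subseteq> monoms n q" unfolding X_def by (metis (no_types, lifting) mem_Collect_eq subsetI)
    moreover have "Y \<subseteq> monoms n q"
    proof
      fix \<gamma> assume "\<gamma> \<in> Y"
      then obtain \<mu> where mu: "\<mu> \<in> monoms n 3" "\<gamma> = ?h \<mu>" unfolding Y_def by blast
      have "(\<Sum>i<n. \<gamma> i) = (\<Sum>i<n. \<mu> i + (if i = 1 then q - 3 else 0))"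
        using mu by (intro sum.cong) auto
      also have "\<dots> = (\<Sum>i<n. \<mu> i) + (q - 3)" using assms by (simp add: sum.distrib)
      finally show "\<gamma> \<in> monoms n q" using mu assms by (auto simp: monoms_def)
    qed
    ultimately show ?thesis by blast
  qed
  have disj: "X \<inter> Y = {}"
  proof (rule ccontr)
    assume "X \<inter> Y \<noteq> {}"
    then obtain \<gamma> where gX: "\<gamma> \<in> X" and gY: "\<gamma> \<in> Y" by blast
    then obtain \<mu> where mu: "\<mu> \<in> monoms n 3" "\<mu> \<noteq> e3" "\<gamma> = ?h \<mu>" unfolding Y_def by blast
    have "q - m \<le> \<gamma> 0" using gX unfolding X_def e_def le_fun_def by (metis (mono_tags, lifting) mem_Collect_eq)
    then have g0: "3 \<le> \<mu> 0" using mu assms by simp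
    have "\<mu> 0 \<le> (\<Sum>i<n. \<mu> i)" using assms by (intro member_le_sum) auto
    then have "\<mu> 0 = 3" using mu g0 by (simp add: monoms_def)
    have "(\<Sum>i<n. \<mu> i) = \<mu> 0 + (\<Sum>i\<in>{..<n}-{0}. \<mu> i)" by (rule sum.remove) (use assms in auto)
    then have "\<forall>i\<in>{..<n}-{0}. \<mu> i = 0" using \<open>\<mu> 0 = 3\<close> mu by (simp add: monoms_def)
    then have "\<mu> = e3"
    proof -
      assume z: "\<forall>i\<in>{..<n}-{0}. \<mu> i = 0"
      show "\<mu> = e3"
      proof
        fix i show "\<mu> i = e3 i"
        proof (cases "i = 0")
          case True then show ?thesis using \<open>\<mu> 0 = 3\<close> by (simp add: e3_def)
        next
          case False
          then have "\<mu> i = 0" using z mu(1) unfolding monoms_def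
            by (cases "i < n") auto
          then show ?thesis using False by (simp add: e3_def)
        qed
      qed
    qed
    then show False using mu by simp
  qed
  have "card X + card Y \<le> card (monoms n q)"
    using card_Un_disjoint[of X Y] disj card_mono[OF finite_monoms sub]
      finite_subset[OF sub finite_monoms] by simp
  then show ?thesis using cX cY by simp
qed



lemma single:
  assumes "is_coeffvec n a g" "\<forall>x. g x \<ge> 0" "Rnz n a g = 1"
  shows "\<exists>\<alpha> c. \<alpha> \<in> monoms n a \<and> c > 0 \<and> g = (\<lambda>\<gamma>. if \<gamma> = \<alpha> then c else 0)"
proof -
  obtain \<alpha> where al: "{\<alpha>\<in>monoms n a. g \<alpha> \<noteq> 0} = {\<alpha>}"
    using assms(3) unfolding Rnz_def by (meson card_1_singletonE)
  then have am: "\<alpha> \<in> monoms n a" and nz: "g \<alpha> \<noteq> 0" by auto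
  have "g = (\<lambda>\<gamma>. if \<gamma> = \<alpha> then g \<alpha> else 0)"
  proof
    fix \<gamma> show "g \<gamma> = (if \<gamma> = \<alpha> then g \<alpha> else 0)"
    proof (cases "\<gamma> = \<alpha>")
      case False
      show ?thesis
      proof (cases "\<gamma> \<in> monoms n a")
        case True then show ?thesis using al False by auto
      next
        case False then show ?thesis using assms(1) \<open>\<gamma> \<noteq> \<alpha>\<close> by (simp add: is_coeffvec_def)
      qed
    qed simp
  qed
  moreover have "g \<alpha> > 0" using nz assms(2) by (simp add: order_le_neq_trans)
  ultimately show ?thesis using am by blast
qed

lemma pos_of_single:
  assumes "\<alpha> \<in> monoms n a" "c > 0" "g = (\<lambda>\<gamma>. if \<gamma> = \<alpha> then c else 0)"
    "\<gamma> \<in> monoms n (a + p)" "\<alpha> \<le> \<gamma>"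
  shows "(Jmul n ^^ p) g \<gamma> > 0"
  by (rule Jpow_pos[of g \<alpha>]) (use assms in \<open>auto simp: monoms_def\<close>)

lemma zero_of_single:
  assumes "g = (\<lambda>\<gamma>. if \<gamma> = \<alpha> then c else 0)" "\<not> \<alpha> \<le> \<gamma>"
  shows "(Jmul n ^^ p) g \<gamma> = 0"
proof (rule ccontr)
  assume "(Jmul n ^^ p) g \<gamma> \<noteq> 0"
  then obtain \<gamma>' where "\<gamma>' \<le> \<gamma>" "g \<gamma>' \<noteq> 0" using Jpow_witness by blast
  then show False using assms by (cases "\<gamma>' = \<alpha>") auto
qed

lemma exists_bigger:
  fixes \<alpha> \<beta> :: "nat \<Rightarrow> nat"
  assumes "(\<Sum>i<n. \<alpha> i) < (\<Sum>i<n. \<beta> i)"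
  shows "\<exists>j<n. \<alpha> j < \<beta> j"
proof (rule ccontr)
  assume "\<not> ?thesis"
  then have h: "\<And>i. i<n \<Longrightarrow> \<beta> i \<le> \<alpha> i" by (meson not_less)
  have "(\<Sum>i<n. \<beta> i) \<le> (\<Sum>i<n. \<alpha> i)" by (rule sum_mono) (simp add: h)
  then show False using assms by simp
qed

lemma other_idx: "n \<ge> 2 \<Longrightarrow> j < n \<Longrightarrow> \<exists>i<n. i \<noteq> (j::nat)"
  by (rule exI[of _ "if j = 0 then 1 else 0"]) auto

lemma upd_monoms:
  assumes "\<alpha> \<in> monoms n a" "i < n"
  shows "\<alpha>(i := \<alpha> i + p) \<in> monoms n (a + p)"
proof -
  have "(\<Sum>k<n. (\<alpha>(i := \<alpha> i + p)) k) = (\<Sum>k<n. \<alpha> k + (if k = i then p else 0))"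
    by (intro sum.cong) auto
  also have "\<dots> = (\<Sum>k<n. \<alpha> k) + p" using assms by (simp add: sum.distrib)
  finally show ?thesis using assms by (auto simp: monoms_def)
qed



theorem lemma5p4:
  fixes n d a b :: nat and ga gb :: "(nat \<Rightarrow> nat) \<Rightarrow> real"
  assumes "n \<ge> 2" "d \<ge> 2" "a < b" "b \<le> d"
    and "is_coeffvec n a ga" "is_coeffvec n b gb"
    and "\<forall>\<alpha>. ga \<alpha> \<ge> 0" "\<forall>\<alpha>. gb \<alpha> \<ge> 0"
    and "Rnz n a ga = 1" "Rnz n b gb = 1"
    and "v = (\<lambda>\<alpha>. (-1) ^ (d - a) * ((Jmul n ^^ (d - a + 1)) ga) \<alpha>
                 + (-1) ^ (d - b) * ((Jmul n ^^ (d - b + 1)) gb) \<alpha>)"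
    and "\<forall>\<alpha>\<in>monoms n (d + 1). v \<alpha> \<ge> 0"
  shows "Rnz n (d + 1) v \<ge> (n + 2 choose 3) - 1"
proof -
  note n2 = assms(1)
  obtain \<alpha> c where am: "\<alpha> \<in> monoms n a" and c: "c > 0" and ga: "ga = (\<lambda>\<gamma>. if \<gamma> = \<alpha> then c else 0)"
    using single[OF assms(5,7,9)] by blast
  obtain \<beta> c' where bm: "\<beta> \<in> monoms n b" and c': "c' > 0" and gb: "gb = (\<lambda>\<gamma>. if \<gamma> = \<beta> then c' else 0)"
    using single[OF assms(6,8,10)] by blast
  define D where "D = d - a + 1"
  define m where "m = d - b + 1"
  define k where "k = b - a"
  define e1 :: real where "e1 = (-1) ^ (d - a)"
  define e2 :: real where "e2 = (-1) ^ (d - b)"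
  define A where "A = (Jmul n ^^ D) ga"
  define B where "B = (Jmul n ^^ m) gb"
  have v: "\<And>\<gamma>. v \<gamma> = e1 * A \<gamma> + e2 * B \<gamma>"
    using assms(11) by (simp add: e1_def e2_def A_def B_def D_def m_def)
  have vnn: "\<And>\<gamma>. \<gamma> \<in> monoms n (d + 1) \<Longrightarrow> v \<gamma> \<ge> 0" using assms(12) by blast
  have aD: "a + D = d + 1" and bm1: "b + m = d + 1" and Dmk: "D = m + k" and m1: "m \<ge> 1"
    using assms(3,4) by (auto simp: D_def m_def k_def)
  have k1: "k \<ge> 1" using assms(3) by (simp add: k_def)
  have Ann: "\<And>\<gamma>. A \<gamma> \<ge> 0" unfolding A_def by (rule Jpow_nonneg) (simp add: ga c order.strict_implies_order)
  have Bnn: "\<And>\<gamma>. B \<gamma> \<ge> 0" unfolding B_def by (rule Jpow_nonneg) (simp add: gb c' order.strict_implies_order)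
  have Apos: "\<And>\<gamma>. \<gamma> \<in> monoms n (d + 1) \<Longrightarrow> \<alpha> \<le> \<gamma> \<Longrightarrow> A \<gamma> > 0"
    unfolding A_def by (rule pos_of_single[OF am c ga]) (simp_all add: aD)
  have Bpos: "\<And>\<gamma>. \<gamma> \<in> monoms n (d + 1) \<Longrightarrow> \<beta> \<le> \<gamma> \<Longrightarrow> B \<gamma> > 0"
    unfolding B_def by (rule pos_of_single[OF bm c' gb]) (simp_all add: bm1)
  have Azero: "\<And>\<gamma>. \<not> \<alpha> \<le> \<gamma> \<Longrightarrow> A \<gamma> = 0" unfolding A_def by (rule zero_of_single[OF ga])
  have Bzero: "\<And>\<gamma>. \<not> \<beta> \<le> \<gamma> \<Longrightarrow> B \<gamma> = 0" unfolding B_def by (rule zero_of_single[OF gb])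
  define SA where "SA = {\<gamma>\<in>monoms n (d + 1). \<alpha> \<le> \<gamma>}"
  define SB where "SB = {\<gamma>\<in>monoms n (d + 1). \<beta> \<le> \<gamma>}"
  have cSA: "card SA = card (monoms n D)" unfolding SA_def aD[symmetric] by (rule upset_card[OF am])
  have cSB: "card SB = card (monoms n m)" unfolding SB_def bm1[symmetric] by (rule upset_card[OF bm])
  have finSA: "finite SA" unfolding SA_def using finite_monoms by simp
  have c3: "card (monoms n 3) = (n + 2 choose 3)"
    using card_monoms[of n 3] n2 by (simp add: add.commute)
  have c0: "card (monoms n 0) = 1" by (simp add: card_monoms)
  define NZ where "NZ = {\<gamma>\<in>monoms n (d + 1). v \<gamma> \<noteq> 0}"
  have R: "Rnz n (d + 1) v = card NZ" by (simp add: Rnz_def NZ_def)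
  have sub_NZ: "\<And>T. T \<subseteq> NZ \<Longrightarrow> card T \<le> card NZ"
    by (rule card_mono) (simp_all add: NZ_def finite_monoms)
  have e12: "e1 = e2 * (-1) ^ k"
    using assms(3,4) by (simp add: e1_def e2_def k_def power_add[symmetric])
  have e2c: "e2 = 1 \<or> e2 = -1" unfolding e2_def by (cases "even (d - b)") auto
  have sa_sums: "(\<Sum>i<n. \<alpha> i) = a" "(\<Sum>i<n. \<beta> i) = b" "\<forall>i\<ge>n. \<alpha> i = 0" "\<forall>i\<ge>n. \<beta> i = 0"
    using am bm by (auto simp: monoms_def)
  show ?thesis
  proof (cases "even k")
    case True
    then have ee: "e1 = e2" using e12 by simp
    have "SA \<subseteq> NZ"
    proof
      fix \<gamma> assume g: "\<gamma> \<in> SA"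
      then have "A \<gamma> > 0" using Apos unfolding SA_def by blast
      then have "A \<gamma> + B \<gamma> \<noteq> 0" using Bnn[of \<gamma>] by linarith
      then have "v \<gamma> \<noteq> 0" using v[of \<gamma>] ee e2c by auto
      then show "\<gamma> \<in> NZ" using g unfolding SA_def NZ_def by blast
    qed
    then have "card (monoms n D) \<le> card NZ" using sub_NZ cSA by metis
    moreover have "3 \<le> D" using True k1 m1 Dmk by presburger
    ultimately have "card (monoms n 3) \<le> card NZ" using count_main[OF n2, of 0 D] c0 by simp
    then show ?thesis using R c3 by simp
  next
    case False
    then have ee: "e1 = - e2" using e12 by simp
    obtain j where j: "j < n" "\<alpha> j < \<beta> j" using exists_bigger[of \<alpha> n \<beta>] sa_sums assms(3) by auto
    obtain i where i: "i < n" "i \<noteq> j" using other_idx[OF n2 j(1)] by blast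
    define \<gamma>1 where "\<gamma>1 = \<alpha>(i := \<alpha> i + D)"
    have g1m: "\<gamma>1 \<in> monoms n (d + 1)" unfolding \<gamma>1_def aD[symmetric] by (rule upd_monoms[OF am i(1)])
    have "\<alpha> \<le> \<gamma>1" by (simp add: \<gamma>1_def le_fun_def)
    then have "A \<gamma>1 > 0" using Apos g1m by blast
    moreover have "\<not> \<beta> \<le> \<gamma>1" using j i by (auto simp: \<gamma>1_def le_fun_def intro!: exI[of _ j])
    then have "B \<gamma>1 = 0" using Bzero by blast
    ultimately have "e1 \<ge> 0" using vnn[OF g1m] v[of \<gamma>1] by (simp add: zero_le_mult_iff)
    then have e1: "e1 = 1" and e2: "e2 = -1" using ee e2c by auto
    have ab: "\<alpha> \<le> \<beta>"
    proof (rule ccontr)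
      assume "\<not> \<alpha> \<le> \<beta>"
      then obtain j' where j': "\<beta> j' < \<alpha> j'" by (auto simp: le_fun_def not_le)
      then have "j' < n" using sa_sums by (metis not_le not_less_zero)
      then obtain i' where i': "i' < n" "i' \<noteq> j'" using other_idx[OF n2] by blast
      define \<gamma>2 where "\<gamma>2 = \<beta>(i' := \<beta> i' + m)"
      have g2m: "\<gamma>2 \<in> monoms n (d + 1)" unfolding \<gamma>2_def bm1[symmetric] by (rule upd_monoms[OF bm i'(1)])
      have "\<beta> \<le> \<gamma>2" by (simp add: \<gamma>2_def le_fun_def)
      then have "B \<gamma>2 > 0" using Bpos g2m by blast
      moreover have "\<not> \<alpha> \<le> \<gamma>2" using j' i' by (auto simp: \<gamma>2_def le_fun_def intro!: exI[of _ j'])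
      then have "A \<gamma>2 = 0" using Azero by blast
      ultimately have "v \<gamma>2 < 0" using v[of \<gamma>2] e1 e2 by simp
      then show False using vnn[OF g2m] by simp
    qed
    have SBSA: "SB \<subseteq> SA" using ab unfolding SA_def SB_def using order_trans by blast
    show ?thesis
    proof (cases "k = 1")
      case False
      then have k3: "m + 3 \<le> D" using \<open>odd k\<close> k1 Dmk by presburger
      have "SA - SB \<subseteq> NZ"
      proof
        fix \<gamma> assume g: "\<gamma> \<in> SA - SB"
        then have "A \<gamma> > 0" "B \<gamma> = 0" using Apos Bzero unfolding SA_def SB_def by auto
        then have "v \<gamma> \<noteq> 0" using v[of \<gamma>] e1 e2 by simp
        then show "\<gamma> \<in> NZ" using g unfolding SA_def NZ_def by blast
      qed
      then have "card (SA - SB) \<le> card NZ" using sub_NZ by blast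
      moreover have "card (SA - SB) = card SA - card SB"
        using SBSA finSA finite_subset by (metis card_Diff_subset)
      moreover have "card (monoms n m) + card (monoms n 3) \<le> card (monoms n D) + 1"
        by (rule count_main[OF n2 k3])
      ultimately show ?thesis using R c3 cSA cSB by simp
    next
      case True
      have bj: "0 < \<beta> j" using j by simp
      let ?b' = "\<beta>(j := \<beta> j - 1)"
      have "\<alpha> \<le> ?b'" using ab j by (auto simp: le_fun_def)
      moreover have "\<forall>i\<ge>n. ?b' i = 0" using sa_sums j by auto
      moreover have "(\<Sum>i<n. ?b' i) = (\<Sum>i<n. \<alpha> i)"
        using sum_dec[of j n \<beta>, OF j(1) bj] sa_sums True assms(3) by (simp add: k_def)
      ultimately have "\<alpha> = ?b'" by (rule le_sum_eq)
      then have beta: "\<beta> = \<alpha>(j := \<alpha> j + 1)" using bj by (auto simp: fun_eq_iff)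
      define Jga where "Jga = Jmul n ga"
      have gann: "\<forall>x. ga x \<ge> 0" using assms(7) by blast
      have Jgann: "\<And>\<gamma>. Jga \<gamma> \<ge> 0" unfolding Jga_def Jmul_def by (rule sum_nonneg) (use gann in blast)
      have Jga_form: "\<And>\<gamma>'. Jga \<gamma>' \<noteq> 0 \<Longrightarrow> \<exists>i<n. \<gamma>' = \<alpha>(i := \<alpha> i + 1)"
      proof -
        fix \<gamma>' assume "Jga \<gamma>' \<noteq> 0"
        then have "(\<Sum>i\<in>{i. i < n \<and> 0 < \<gamma>' i}. ga (\<gamma>'(i := \<gamma>' i - 1))) \<noteq> 0"
          by (simp add: Jga_def Jmul_def)
        then obtain i where "i \<in> {i. i < n \<and> 0 < \<gamma>' i}" "ga (\<gamma>'(i := \<gamma>' i - 1)) \<noteq> 0"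
          by (meson sum.neutral)
        then have "i < n" "0 < \<gamma>' i" "\<gamma>'(i := \<gamma>' i - 1) = \<alpha>" by (auto simp: ga split: if_splits)
        then have "\<gamma>' = \<alpha>(i := \<alpha> i + 1)" by (auto simp: fun_eq_iff split: if_splits)
        then show "\<exists>i<n. \<gamma>' = \<alpha>(i := \<alpha> i + 1)" using \<open>i < n\<close> by blast
      qed
      define P where "P = (\<lambda>\<gamma>. 1 * Jga \<gamma> + (-1) * gb \<gamma>)"
      have DS: "D = Suc m" using Dmk True by simp
      have AJ: "A = (Jmul n ^^ m) Jga" unfolding A_def DS Jga_def by (simp only: funpow_Suc_right comp_apply)
      have vP: "\<And>\<gamma>. v \<gamma> = (Jmul n ^^ m) P \<gamma>"
        unfolding P_def Jpow_lin using v e1 e2 AJ B_def by simp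
      define P1 where "P1 = (\<lambda>\<gamma>. if \<gamma> = \<beta> then 0 else P \<gamma>)"
      define eb :: "(nat \<Rightarrow> nat) \<Rightarrow> real" where "eb = (\<lambda>\<gamma>. if \<gamma> = \<beta> then 1 else 0)"
      define pb where "pb = P \<beta>"
      have PP1: "P = (\<lambda>\<gamma>. 1 * P1 \<gamma> + pb * eb \<gamma>)" by (rule ext) (simp add: P1_def eb_def pb_def)
      define \<gamma>0 where "\<gamma>0 = \<alpha>(j := \<alpha> j + D)"
      have g0m: "\<gamma>0 \<in> monoms n (d + 1)" unfolding \<gamma>0_def aD[symmetric] by (rule upd_monoms[OF am j(1)])
      have v0: "v \<gamma>0 = (Jmul n ^^ m) P1 \<gamma>0 + pb * (Jmul n ^^ m) eb \<gamma>0"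
        using vP[of \<gamma>0] Jpow_lin[of m n 1 P1 pb eb] by (simp add: PP1)
      have "(Jmul n ^^ m) P1 \<gamma>0 = 0"
      proof (rule ccontr)
        assume "(Jmul n ^^ m) P1 \<gamma>0 \<noteq> 0"
        then obtain \<gamma>' where g': "\<gamma>' \<le> \<gamma>0" "P1 \<gamma>' \<noteq> 0" using Jpow_witness by blast
        then have nb: "\<gamma>' \<noteq> \<beta>" unfolding P1_def by auto
        then have "P \<gamma>' \<noteq> 0" using g'(2) unfolding P1_def by simp
        then have "Jga \<gamma>' \<noteq> 0" using nb unfolding P_def gb by simp
        note nb this
        then obtain i' where i': "i' < n" "\<gamma>' = \<alpha>(i' := \<alpha> i' + 1)" using Jga_form by blast
        show False
        proof (cases "i' = j")
          case True then show False using i' beta \<open>\<gamma>' \<noteq> \<beta>\<close> by simp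
        next
          case False
          then have "\<gamma>' i' \<le> \<gamma>0 i'" using g'(1) by (simp add: le_fun_def)
          then show False using False i' by (simp add: \<gamma>0_def)
        qed
      qed
      moreover have "(Jmul n ^^ m) eb \<gamma>0 > 0"
        by (rule pos_of_single[OF bm zero_less_one eb_def])
          (use g0m bm1 in \<open>simp_all add: beta \<gamma>0_def le_fun_def DS\<close>)
      ultimately have "pb \<ge> 0" using vnn[OF g0m] v0 by (simp add: zero_le_mult_iff)
      then have Pnn: "\<forall>\<gamma>. P \<gamma> \<ge> 0" using Jgann by (auto simp: P_def gb pb_def)
      have "SA - {\<gamma>0} \<subseteq> NZ"
      proof
        fix \<gamma> assume g: "\<gamma> \<in> SA - {\<gamma>0}"
        then have gm: "\<gamma> \<in> monoms n (d + 1)" and ag: "\<alpha> \<le> \<gamma>" and gne: "\<gamma> \<noteq> \<gamma>0" unfolding SA_def by auto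
        have "\<exists>i<n. i \<noteq> j \<and> \<alpha> i < \<gamma> i"
        proof (rule ccontr)
          assume "\<not> ?thesis"
          then have nl: "\<And>t. t < n \<Longrightarrow> t \<noteq> j \<Longrightarrow> \<not> \<alpha> t < \<gamma> t" by blast
          have eq: "\<And>t. t < n \<Longrightarrow> t \<noteq> j \<Longrightarrow> \<gamma> t = \<alpha> t"
          proof -
            fix t assume "t < n" "t \<noteq> j"
            moreover have "\<alpha> t \<le> \<gamma> t" using ag by (simp add: le_fun_def)
            ultimately show "\<gamma> t = \<alpha> t" using nl by fastforce
          qed
          have "(\<Sum>t<n. \<gamma> t) = \<gamma> j + (\<Sum>t\<in>{..<n}-{j}. \<gamma> t)" by (rule sum.remove) (use j in auto)
          moreover have "(\<Sum>t<n. \<alpha> t) = \<alpha> j + (\<Sum>t\<in>{..<n}-{j}. \<alpha> t)" by (rule sum.remove) (use j in auto)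
          moreover have "(\<Sum>t\<in>{..<n}-{j}. \<gamma> t) = (\<Sum>t\<in>{..<n}-{j}. \<alpha> t)" by (rule sum.cong) (auto simp: eq)
          ultimately have "\<gamma> j = \<alpha> j + D" using gm sa_sums aD by (simp add: monoms_def)
          then have "\<gamma> = \<gamma>0"
          proof -
            assume gj: "\<gamma> j = \<alpha> j + D"
            show "\<gamma> = \<gamma>0"
            proof
              fix t show "\<gamma> t = \<gamma>0 t"
              proof (cases "t = j")
                case True then show ?thesis using gj by (simp add: \<gamma>0_def)
              next
                case False
                show ?thesis
                proof (cases "t < n")
                  case True then show ?thesis using eq False by (simp add: \<gamma>0_def)
                next
                  case nt: False
                  then show ?thesis using gm sa_sums False by (simp add: \<gamma>0_def monoms_def)
                qed
              qed
            qed
          qed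
          then show False using gne by simp
        qed
        then obtain i where i: "i < n" "i \<noteq> j" "\<alpha> i < \<gamma> i" by blast
        define \<delta> where "\<delta> = \<alpha>(i := \<alpha> i + 1)"
        have dm: "\<delta> \<in> monoms n (a + 1)" unfolding \<delta>_def by (rule upd_monoms[OF am i(1)])
        have "\<delta> \<noteq> \<beta>" using i by (auto simp: \<delta>_def beta fun_eq_iff intro!: exI[of _ i])
        moreover have "ga (\<delta>(i := \<delta> i - 1)) \<le> Jga \<delta>" unfolding Jga_def
          by (rule Jmul_ge[OF gann i(1)]) (simp add: \<delta>_def)
        moreover have "\<delta>(i := \<delta> i - 1) = \<alpha>" by (simp add: \<delta>_def)
        ultimately have Pd: "P \<delta> > 0" using c by (simp add: P_def gb ga)
        have "(Jmul n ^^ m) P \<gamma> > 0"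
        proof (rule Jpow_pos[OF Pnn Pd])
          show "\<delta> \<le> \<gamma>" using ag i by (auto simp: \<delta>_def le_fun_def)
          show "\<forall>i\<ge>n. \<gamma> i = 0" using gm by (simp add: monoms_def)
          show "(\<Sum>i<n. \<gamma> i) = (\<Sum>i<n. \<delta> i) + m" using gm dm aD DS by (simp add: monoms_def)
        qed
        then have "v \<gamma> \<noteq> 0" using vP by simp
        then show "\<gamma> \<in> NZ" using gm unfolding NZ_def by blast
      qed
      then have "card (SA - {\<gamma>0}) \<le> card NZ" using sub_NZ by blast
      moreover have "\<gamma>0 \<in> SA" using g0m unfolding SA_def \<gamma>0_def by (simp add: le_fun_def)
      moreover have "even (d - a)" using e1 unfolding e1_def by (cases "even (d - a)") auto
      then have "3 \<le> D" using assms(3,4) D_def by presburger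
      ultimately show ?thesis using count_main[OF n2, of 0 D] c0 cSA R c3 finSA by simp
    qed
  qed
qed


end
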